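(* Assume: the vectors $\pi(t)\in\mathbb R^m$ have nonnegative entries summing to $1$ and satisfy (i) $\pi(t)^\top=\pi(t+1)^\top A(t)$ for all $t$, (ii) $|[A(s:t)]_{ij}-\pi_j(t)|\le B\lambda^{s-t}$ for all $i,j$, $s\ge t\ge0$, with $B>0$, $\lambda\in(0,1)$, and (iii) $\pi_i(t)\ge\eta$ for all $i,t$ for some $\eta>0$; there is $R\ge1$ with $\mathrm{dist}(x,\Omega)\le R\max_{i}\mathrm{dist}(x,\Omega_i)$ for all $x\in U=\mathrm{conv}(\bigcup_i\Omega_i)$; $\theta_i(0)\in\Omega_i$ for all $i$; and $\{\alpha(t)\}$ is nonincreasing. Let $\theta_i(t)$ be the DPG iterates, $\bar\theta(t)=\sum_j\pi_j(t)\theta_j(t)$, $w(t)=P_\Omega[\bar\theta(t)]$, $\beta(t)=\sum_i\|\phi_i(t)\|$, $\psi(t)=\alpha(t)\sum_{r=0}^{t-1}\lambda^{t-r-1}\beta(r)$, and define $D_1=B\sum_j\|\theta_j(0)\|$, $D_2=mBC$, $D_3=2C(1+R/\eta)$, $D_4=\eta/2$, $b=\sqrt{\eta/m}$, $a=\frac{D_3B}{(1-\lambda)b}$, $D_5=C^2+a^2/2$, $D_{13}=D_1D_3$, $D_{23}=D_2D_3$. Then for every $v\in\Omega$ and every $t\ge0$, $$\sum_{i=1}^m\pi_i(t+1)\|\theta_i(t+1)-v\|^2+ab\,\psi(t+1)\le\sum_{i=1}^m\pi_i(t)\|\theta_i(t)-v\|^2+ab\,\psi(t)-2\alpha(t)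c^\top(w(t)-v)+D_5\alpha^2(t)-D_4\sum_{i=1}^m\|\phi_i(t)\|^2+D_{13}\alpha(t)\lambda^t+D_{23}\alpha(t)\sum_{r=0}^{t-1}\lambda^{t-r-1}\alpha(r).$$
   Context: Agents $\mathcal V=\{1,\dots,m\}$. $A(t)=[a_{ij}(t)]\in\mathbb R^{m\times m}$, $t\in\mathbb Z_{\ge0}$, are row-stochastic matrices with nonnegative entries; for $s\ge t$, $A(s:t)=A(s-1)\cdots A(t)$, $A(t:t)=I$. $\Omega_1,\dots,\Omega_m\subseteq\mathbb R^p$ are nonempty closed convex sets with $\Omega=\bigcap_i\Omega_i\ne\emptyset$; $c\in\mathbb R^p$, $C=\|c\|$; $\alpha(t)>0$ are stepsizes. $P_K$ denotes Euclidean projection onto a closed convex set $K$ and $\mathrm{dist}(x,K)=\inf_{z\in K}\|x-z\|$. DPG iteration: $\theta_i(t+1)=P_{\Omega_i}\big[\sum_j a_{ij}(t)\theta_j(t)-\alpha(t)c\big]$, and $\phi_i(t)=\theta_i(t+1)-\big[\sum_j a_{ij}(t)\theta_j(t)-\alpha(t)c\big]$. *)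

theory Defs
  imports "HOL-Analysis.Analysis"
begin

text \<open>Matrices over a finite agent index type 'i are functions 'i => 'i => real.
  mat_prod X Y is the usual product; trans_prod A s t is A(s:t) = A(s-1) ... A(t),
  with A(t:t) = I (and, by convention, I also for s < t, which is never used).\<close>

definition mat_prod :: "('i::finite \<Rightarrow> 'i \<Rightarrow> real) \<Rightarrow> ('i \<Rightarrow> 'i \<Rightarrow> real) \<Rightarrow> 'i \<Rightarrow> 'i \<Rightarrow> real" where
  "mat_prod X Y = (\<lambda>i j. \<Sum>k\<in>UNIV. X i k * Y k j)"

definition id_mat :: "'i \<Rightarrow> 'i \<Rightarrow> real" where
  "id_mat = (\<lambda>i j. if i = j then 1 else 0)"

fun trans_prod :: "(nat \<Rightarrow> 'i::finite \<Rightarrow> 'i \<Rightarrow> real) \<Rightarrow> nat \<Rightarrow> nat \<Rightarrow> 'i \<Rightarrow> 'i \<Rightarrow> real" where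
  "trans_prod A 0 t = id_mat"
| "trans_prod A (Suc s) t = (if Suc s \<le> t then id_mat else mat_prod (A s) (trans_prod A s t))"

end

theory Submission imports Defs begin

lemma proj_ineq:
  fixes S :: "'a::euclidean_space set"
  assumes "closed S" "convex S" "v \<in> S"
  shows "(norm (closest_point S x - v))\<^sup>2 \<le> (norm (x - v))\<^sup>2 - (norm (closest_point S x - x))\<^sup>2"
proof -
  define p where "p = closest_point S x"
  have d: "inner (x - p) (v - p) \<le> 0" using closest_point_dot[OF assms(2,1,3)] p_def by simp
  have "(norm (x - v))\<^sup>2 = (norm (x - p))\<^sup>2 + (norm (p - v))\<^sup>2 - 2 * inner (x - p) (v - p)"
    unfolding power2_norm_eq_inner by (simp add: inner_diff inner_commute algebra_simps)
  moreover have "(norm (p - x))\<^sup>2 = (norm (x - p))\<^sup>2" by (simp add: norm_minus_commute)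
  ultimately show ?thesis using d p_def by simp
qed

lemma sq_jensen:
  fixes y :: "'k \<Rightarrow> 'a::real_normed_vector"
  assumes "finite I" "\<And>j. j \<in> I \<Longrightarrow> w j \<ge> 0" "sum w I = 1"
  shows "(norm (\<Sum>j\<in>I. w j *\<^sub>R y j))\<^sup>2 \<le> (\<Sum>j\<in>I. w j * (norm (y j))\<^sup>2)"
proof -
  have ne: "I \<noteq> {}" using assms(3) by auto
  have "norm (\<Sum>j\<in>I. w j *\<^sub>R y j) \<le> (\<Sum>j\<in>I. w j * norm (y j))"
    by (rule order_trans[OF norm_sum]) (simp add: assms(2))
  hence "(norm (\<Sum>j\<in>I. w j *\<^sub>R y j))\<^sup>2 \<le> (\<Sum>j\<in>I. w j * norm (y j))\<^sup>2"
    by (simp add: power_mono)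
  also have "\<dots> \<le> (\<Sum>j\<in>I. w j * (norm (y j))\<^sup>2)"
    using convex_on_sum[OF assms(1) ne convex_power2, of w "\<lambda>j. norm (y j)"] assms by simp
  finally show ?thesis .
qed

lemma norm_sum_bound:
  fixes x :: "'k \<Rightarrow> 'a::real_normed_vector"
  assumes "\<And>k. k \<in> I \<Longrightarrow> \<bar>c k\<bar> \<le> M"
  shows "norm (\<Sum>k\<in>I. c k *\<^sub>R x k) \<le> M * (\<Sum>k\<in>I. norm (x k))"
proof -
  have "norm (\<Sum>k\<in>I. c k *\<^sub>R x k) \<le> (\<Sum>k\<in>I. \<bar>c k\<bar> * norm (x k))"
    by (rule order_trans[OF norm_sum]) simp
  also have "\<dots> \<le> (\<Sum>k\<in>I. M * norm (x k))"
    by (rule sum_mono) (simp add: assms mult_right_mono)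
  finally show ?thesis by (simp add: sum_distrib_left)
qed

lemma delta_sum: fixes f :: "'i::finite \<Rightarrow> 'a::real_vector" shows "(\<Sum>k\<in>(UNIV::'i::finite set). (if i = k then 1 else 0) *\<^sub>R f k) = f i"
proof -
  have "(\<Sum>k\<in>(UNIV::'i set). (if i = k then 1 else 0) *\<^sub>R f k) = (\<Sum>k\<in>UNIV. if i = k then f k else 0)"
    by (rule sum.cong) auto
  then show ?thesis by (simp add: sum.delta)
qed

lemma mix_sum:
  fixes x :: "'k \<Rightarrow> 'a::real_vector" and a :: "'j \<Rightarrow> real"
  shows "(\<Sum>j\<in>J. a j *\<^sub>R (\<Sum>k\<in>K. T j k *\<^sub>R x k)) = (\<Sum>k\<in>K. (\<Sum>j\<in>J. a j * T j k) *\<^sub>R x k)"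
proof -
  have "(\<Sum>j\<in>J. a j *\<^sub>R (\<Sum>k\<in>K. T j k *\<^sub>R x k)) = (\<Sum>j\<in>J. \<Sum>k\<in>K. (a j * T j k) *\<^sub>R x k)"
    by (simp add: scaleR_sum_right)
  also have "\<dots> = (\<Sum>k\<in>K. \<Sum>j\<in>J. (a j * T j k) *\<^sub>R x k)" by (rule sum.swap)
  also have "\<dots> = (\<Sum>k\<in>K. (\<Sum>j\<in>J. a j * T j k) *\<^sub>R x k)" by (simp add: scaleR_sum_left)
  finally show ?thesis .
qed

lemma trans_prod_same: "trans_prod A s s = id_mat"
  by (cases s) auto

lemma expand:
  fixes A :: "nat \<Rightarrow> 'i::finite \<Rightarrow> 'i \<Rightarrow> real" and theta :: "nat \<Rightarrow> 'i \<Rightarrow> 'a::real_vector"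
  assumes rec: "\<And>s i. theta (Suc s) i = (\<Sum>j\<in>UNIV. A s i j *\<^sub>R theta s j) + u s i"
  shows "theta t i = (\<Sum>k\<in>UNIV. trans_prod A t 0 i k *\<^sub>R theta 0 k)
           + (\<Sum>r<t. \<Sum>k\<in>UNIV. trans_prod A t (Suc r) i k *\<^sub>R u r k)"
proof (induction t arbitrary: i)
  case 0
  have "(\<Sum>k\<in>UNIV. id_mat i k *\<^sub>R theta 0 k) = theta 0 i"
    by (simp add: id_mat_def delta_sum)
  then show ?case by simp
next
  case (Suc t)
  have T0: "trans_prod A (Suc t) 0 i k = (\<Sum>j\<in>UNIV. A t i j * trans_prod A t 0 j k)" for k
    by (simp add: mat_prod_def)
  have Tr: "trans_prod A (Suc t) (Suc r) i k = (\<Sum>j\<in>UNIV. A t i j * trans_prod A t (Suc r) j k)"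
    if "r < t" for r k using that by (simp add: mat_prod_def)
  have Tt: "(\<Sum>k\<in>UNIV. trans_prod A (Suc t) (Suc t) i k *\<^sub>R u t k) = u t i"
    by (simp add: trans_prod_same id_mat_def delta_sum)
  have "theta (Suc t) i = (\<Sum>j\<in>UNIV. A t i j *\<^sub>R ((\<Sum>k\<in>UNIV. trans_prod A t 0 j k *\<^sub>R theta 0 k)
           + (\<Sum>r<t. \<Sum>k\<in>UNIV. trans_prod A t (Suc r) j k *\<^sub>R u r k))) + u t i"
    using rec Suc.IH by simp
  also have "\<dots> = (\<Sum>k\<in>UNIV. (\<Sum>j\<in>UNIV. A t i j * trans_prod A t 0 j k) *\<^sub>R theta 0 k)
       + (\<Sum>r<t. \<Sum>k\<in>UNIV. (\<Sum>j\<in>UNIV. A t i j * trans_prod A t (Suc r) j k) *\<^sub>R u r k) + u t i"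
  proof -
    have "(\<Sum>j\<in>UNIV. A t i j *\<^sub>R (\<Sum>r<t. \<Sum>k\<in>UNIV. trans_prod A t (Suc r) j k *\<^sub>R u r k))
       = (\<Sum>r<t. \<Sum>j\<in>UNIV. A t i j *\<^sub>R (\<Sum>k\<in>UNIV. trans_prod A t (Suc r) j k *\<^sub>R u r k))"
      by (simp only: scaleR_sum_right) (rule sum.swap)
    then show ?thesis by (simp only: scaleR_add_right sum.distrib mix_sum)
  qed
  also have "\<dots> = (\<Sum>k\<in>UNIV. trans_prod A (Suc t) 0 i k *\<^sub>R theta 0 k)
       + (\<Sum>r<Suc t. \<Sum>k\<in>UNIV. trans_prod A (Suc t) (Suc r) i k *\<^sub>R u r k)"
  proof -
    have "(\<Sum>r<t. \<Sum>k\<in>UNIV. (\<Sum>j\<in>UNIV. A t i j * trans_prod A t (Suc r) j k) *\<^sub>R u r k)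
       = (\<Sum>r<t. \<Sum>k\<in>UNIV. trans_prod A (Suc t) (Suc r) i k *\<^sub>R u r k)"
      by (rule sum.cong[OF refl]) (simp add: mat_prod_def)
    then show ?thesis by (simp only: T0 Tt sum.lessThan_Suc) simp
  qed
  finally show ?case .
qed

theorem proposition8:
  fixes A :: "nat \<Rightarrow> 'i::finite \<Rightarrow> 'i \<Rightarrow> real"
    and Om :: "'i \<Rightarrow> 'a::euclidean_space set"
    and c :: 'a
    and alpha :: "nat \<Rightarrow> real"
    and theta :: "nat \<Rightarrow> 'i \<Rightarrow> 'a"
    and pi :: "nat \<Rightarrow> 'i \<Rightarrow> real"
    and B lambda eta R :: real
    and v :: 'a and t :: nat
  defines "Omega \<equiv> (\<Inter>i. Om i)"
    and "phi \<equiv> (\<lambda>s i. theta (Suc s) i - ((\<Sum>j\<in>UNIV. A s i j *\<^sub>R theta s j) - alpha s *\<^sub>R c))"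
    and "w \<equiv> (\<lambda>s. closest_point (\<Inter>i. Om i) (\<Sum>j\<in>UNIV. pi s j *\<^sub>R theta s j))"
    and "psi \<equiv> (\<lambda>s. alpha s * (\<Sum>r<s. lambda ^ (s - r - 1) *
                 (\<Sum>i\<in>UNIV. norm (theta (Suc r) i - ((\<Sum>j\<in>UNIV. A r i j *\<^sub>R theta r j) - alpha r *\<^sub>R c)))))"
    and "D1 \<equiv> B * (\<Sum>j\<in>UNIV. norm (theta 0 j))"
    and "D2 \<equiv> real CARD('i) * B * norm c"
    and "D3 \<equiv> 2 * norm c * (1 + R / eta)"
    and "D4 \<equiv> eta / 2"
    and "b \<equiv> sqrt (eta / real CARD('i))"
    and "a \<equiv> (2 * norm c * (1 + R / eta)) * B / ((1 - lambda) * sqrt (eta / real CARD('i)))"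
    and "D5 \<equiv> (norm c)\<^sup>2 + ((2 * norm c * (1 + R / eta)) * B / ((1 - lambda) * sqrt (eta / real CARD('i))))\<^sup>2 / 2"
    and "D13 \<equiv> (B * (\<Sum>j\<in>UNIV. norm (theta 0 j))) * (2 * norm c * (1 + R / eta))"
    and "D23 \<equiv> (real CARD('i) * B * norm c) * (2 * norm c * (1 + R / eta))"
  assumes A_nonneg: "\<And>s i j. 0 \<le> A s i j"
    and A_stoch: "\<And>s i. (\<Sum>j\<in>UNIV. A s i j) = 1"
    and Om_closed: "\<And>i. closed (Om i)"
    and Om_convex: "\<And>i. convex (Om i)"
    and Om_ne: "\<And>i. Om i \<noteq> {}"
    and Omega_ne: "Omega \<noteq> {}"
    and alpha_pos: "\<And>s. alpha s > 0"
    and alpha_noninc: "\<And>s. alpha (Suc s) \<le> alpha s"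
    and theta0: "\<And>i. theta 0 i \<in> Om i"
    and DPG: "\<And>s i. theta (Suc s) i =
                 closest_point (Om i) ((\<Sum>j\<in>UNIV. A s i j *\<^sub>R theta s j) - alpha s *\<^sub>R c)"
    and pi_nonneg: "\<And>s i. 0 \<le> pi s i"
    and pi_sum: "\<And>s. (\<Sum>i\<in>UNIV. pi s i) = 1"
    and pi_stat: "\<And>s j. pi s j = (\<Sum>i\<in>UNIV. pi (Suc s) i * A s i j)"
    and B_pos: "B > 0"
    and lambda_pos: "0 < lambda" and lambda_lt1: "lambda < 1"
    and mixing: "\<And>s r i j. r \<le> s \<Longrightarrow> \<bar>trans_prod A s r i j - pi r j\<bar> \<le> B * lambda ^ (s - r)"
    and eta_pos: "eta > 0"
    and pi_lower: "\<And>s i. pi s i \<ge> eta"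
    and R_ge1: "R \<ge> 1"
    and regular: "\<And>x. x \<in> convex hull (\<Union>i. Om i) \<Longrightarrow>
                   infdist x Omega \<le> R * Max (range (\<lambda>i. infdist x (Om i)))"
    and v_in: "v \<in> Omega"
  shows "(\<Sum>i\<in>UNIV. pi (Suc t) i * (norm (theta (Suc t) i - v))\<^sup>2) + a * b * psi (Suc t)
         \<le> (\<Sum>i\<in>UNIV. pi t i * (norm (theta t i - v))\<^sup>2) + a * b * psi t
            - 2 * alpha t * (c \<bullet> (w t - v)) + D5 * (alpha t)\<^sup>2
            - D4 * (\<Sum>i\<in>UNIV. (norm (phi t i))\<^sup>2)
            + D13 * alpha t * lambda ^ t
            + D23 * alpha t * (\<Sum>r<t. lambda ^ (t - r - 1) * alpha r)"
proof -
  define m where "m = real CARD('i)"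
  define C where "C = norm c"
  define u where "u = (\<lambda>s i. phi s i - alpha s *\<^sub>R c)"
  define tb where "tb = (\<lambda>s. \<Sum>j\<in>UNIV. pi s j *\<^sub>R theta s j)"
  define beta where "beta = (\<lambda>r. \<Sum>i\<in>UNIV. norm (phi r i))"
  define E where "E = (\<lambda>s. D1 * lambda ^ s + B * (\<Sum>r<s. lambda ^ (s - r - 1) * beta r)
                          + m * B * C * (\<Sum>r<s. lambda ^ (s - r - 1) * alpha r))"
  have m_pos: "m > 0" unfolding m_def by simp
  have C_nn: "C \<ge> 0" unfolding C_def by simp
  have rec: "\<And>s i. theta (Suc s) i = (\<Sum>j\<in>UNIV. A s i j *\<^sub>R theta s j) + u s i"
    by (simp add: u_def phi_def)
  have th_in: "theta s i \<in> Om i" for s i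
  proof (cases s)
    case 0 then show ?thesis using theta0 by simp
  next
    case (Suc s') then show ?thesis using DPG closest_point_in_set[OF Om_closed Om_ne] by simp
  qed
  have psi_eq: "psi s = alpha s * (\<Sum>r<s. lambda ^ (s - r - 1) * beta r)" for s
    by (simp add: psi_def phi_def beta_def)
  have beta_nn: "beta r \<ge> 0" for r unfolding beta_def by (simp add: sum_nonneg)
  have eta_le1: "eta \<le> 1"
  proof -
    obtain i0 :: 'i where True by simp
    have "pi 0 i0 \<le> (\<Sum>i\<in>UNIV. pi 0 i)" by (rule member_le_sum) (auto simp: pi_nonneg)
    then show ?thesis using pi_lower[of 0 i0] pi_sum[of 0] by simp
  qed
  have tb_rec: "tb (Suc s) = tb s + (\<Sum>i\<in>UNIV. pi (Suc s) i *\<^sub>R u s i)" for s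
  proof -
    have "tb (Suc s) = (\<Sum>i\<in>UNIV. pi (Suc s) i *\<^sub>R (\<Sum>j\<in>UNIV. A s i j *\<^sub>R theta s j))
                      + (\<Sum>i\<in>UNIV. pi (Suc s) i *\<^sub>R u s i)"
      by (simp add: tb_def rec scaleR_add_right sum.distrib)
    also have "(\<Sum>i\<in>UNIV. pi (Suc s) i *\<^sub>R (\<Sum>j\<in>UNIV. A s i j *\<^sub>R theta s j))
        = (\<Sum>j\<in>UNIV. (\<Sum>i\<in>UNIV. pi (Suc s) i * A s i j) *\<^sub>R theta s j)" by (rule mix_sum)
    also have "\<dots> = tb s" by (simp add: tb_def pi_stat[symmetric])
    finally show ?thesis .
  qed
  have tb_exp: "tb s = (\<Sum>k\<in>UNIV. pi 0 k *\<^sub>R theta 0 k) + (\<Sum>r<s. \<Sum>k\<in>UNIV. pi (Suc r) k *\<^sub>R u r k)" for s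
    proof (induction s)
    case 0 then show ?case by (simp add: tb_def)
  next
    case (Suc s) then show ?case by (simp add: tb_rec)
  qed
  have diff: "theta s i - tb s = (\<Sum>k\<in>UNIV. (trans_prod A s 0 i k - pi 0 k) *\<^sub>R theta 0 k)
       + (\<Sum>r<s. \<Sum>k\<in>UNIV. (trans_prod A s (Suc r) i k - pi (Suc r) k) *\<^sub>R u r k)" for s i
    apply (subst expand[of theta A u, OF rec])
    apply (subst tb_exp)
    by (simp add: scaleR_diff_left sum_subtractf)
  have unorm: "(\<Sum>k\<in>UNIV. norm (u r k)) \<le> beta r + m * (alpha r * C)" for r
  proof -
    have "(\<Sum>k\<in>UNIV. norm (u r k)) \<le> (\<Sum>k\<in>UNIV. norm (phi r k) + alpha r * C)"
      by (rule sum_mono) (use alpha_pos[of r] in \<open>auto simp: u_def C_def intro: order_trans[OF norm_triangle_ineq4]\<close>)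
    also have "\<dots> = beta r + m * (alpha r * C)" by (simp add: beta_def m_def sum.distrib)
    finally show ?thesis .
  qed
  have cons: "norm (theta s i - tb s) \<le> E s" for s i
  proof -
    have n1: "norm (\<Sum>k\<in>UNIV. (trans_prod A s 0 i k - pi 0 k) *\<^sub>R theta 0 k) \<le> D1 * lambda ^ s"
      using norm_sum_bound[of UNIV "\<lambda>k. trans_prod A s 0 i k - pi 0 k" "B * lambda ^ s" "theta 0"]
        mixing[of 0 s i] by (simp add: D1_def mult_ac)
    have n2: "norm (\<Sum>k\<in>UNIV. (trans_prod A s (Suc r) i k - pi (Suc r) k) *\<^sub>R u r k)
        \<le> B * lambda ^ (s - r - 1) * (beta r + m * (alpha r * C))" if "r < s" for r
    proof -
      have "norm (\<Sum>k\<in>UNIV. (trans_prod A s (Suc r) i k - pi (Suc r) k) *\<^sub>R u r k)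
          \<le> B * lambda ^ (s - r - 1) * (\<Sum>k\<in>UNIV. norm (u r k))"
        using norm_sum_bound[of UNIV "\<lambda>k. trans_prod A s (Suc r) i k - pi (Suc r) k" "B * lambda ^ (s - r - 1)" "u r"]
          mixing[of "Suc r" s i] that by simp
      also have "\<dots> \<le> B * lambda ^ (s - r - 1) * (beta r + m * (alpha r * C))"
        by (rule mult_left_mono[OF unorm]) (use B_pos lambda_pos in simp)
      finally show ?thesis .
    qed
    have "norm (theta s i - tb s) \<le> D1 * lambda ^ s
         + (\<Sum>r<s. B * lambda ^ (s - r - 1) * (beta r + m * (alpha r * C)))"
      unfolding diff
      by (rule order_trans[OF norm_triangle_ineq] add_mono n1 order_trans[OF norm_sum] sum_mono n2)+ simp
    also have "\<dots> = E s"
      by (simp add: E_def ring_distribs sum.distrib sum_distrib_left mult_ac)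
    finally show ?thesis .
  qed
  have E_nn: "E s \<ge> 0" for s
    unfolding E_def D1_def using B_pos lambda_pos m_pos C_nn alpha_pos beta_nn
    by (intro add_nonneg_nonneg mult_nonneg_nonneg sum_nonneg) (auto simp: less_imp_le)
  define xs where "xs = (\<lambda>i. (\<Sum>j\<in>UNIV. A t i j *\<^sub>R theta t j) - alpha t *\<^sub>R c)"
  define y where "y = (\<lambda>i. \<Sum>j\<in>UNIV. A t i j *\<^sub>R (theta t j - v))"
  define Sphi where "Sphi = (\<Sum>i\<in>UNIV. (norm (phi t i))\<^sup>2)"
  have v_Om: "v \<in> Om i" for i using v_in by (simp add: Omega_def)
  have xy: "xs i - v = y i - alpha t *\<^sub>R c" for i
  proof -
    have "(\<Sum>j\<in>UNIV. A t i j *\<^sub>R v) = v" by (simp add: scaleR_sum_left[symmetric] A_stoch)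
    then show ?thesis by (simp add: xs_def y_def scaleR_diff_right sum_subtractf)
  qed
  have P1: "(norm (theta (Suc t) i - v))\<^sup>2 \<le> (norm (y i))\<^sup>2 - 2 * alpha t * (c \<bullet> y i)
              + (alpha t)\<^sup>2 * (norm c)\<^sup>2 - (norm (phi t i))\<^sup>2" for i
  proof -
    have th: "theta (Suc t) i = closest_point (Om i) (xs i)" using DPG by (simp add: xs_def)
    have ph: "phi t i = closest_point (Om i) (xs i) - xs i" by (simp add: phi_def th xs_def)
    have "(norm (theta (Suc t) i - v))\<^sup>2 \<le> (norm (xs i - v))\<^sup>2 - (norm (phi t i))\<^sup>2"
      unfolding th ph by (rule proj_ineq[OF Om_closed Om_convex v_Om])
    also have "(norm (xs i - v))\<^sup>2 = (norm (y i))\<^sup>2 - 2 * alpha t * (c \<bullet> y i) + (alpha t)\<^sup>2 * (norm c)\<^sup>2"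
      unfolding xy power2_norm_eq_inner by (simp add: inner_diff inner_commute algebra_simps power2_eq_square)
    finally show ?thesis .
  qed
  have P3: "(norm (y i))\<^sup>2 \<le> (\<Sum>j\<in>UNIV. A t i j * (norm (theta t j - v))\<^sup>2)" for i
    unfolding y_def by (rule sq_jensen) (auto simp: A_nonneg A_stoch)
  define S where "S = (\<lambda>s. \<Sum>i\<in>UNIV. pi s i * (norm (theta s i - v))\<^sup>2)"
  have Q1: "(\<Sum>i\<in>UNIV. pi (Suc t) i * (\<Sum>j\<in>UNIV. A t i j * (norm (theta t j - v))\<^sup>2)) = S t"
  proof -
    have "(\<Sum>i\<in>UNIV. pi (Suc t) i * (\<Sum>j\<in>UNIV. A t i j * (norm (theta t j - v))\<^sup>2))
        = (\<Sum>i\<in>UNIV. \<Sum>j\<in>UNIV. pi (Suc t) i * A t i j * (norm (theta t j - v))\<^sup>2)"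
      by (simp add: sum_distrib_left mult_ac)
    also have "\<dots> = (\<Sum>j\<in>UNIV. \<Sum>i\<in>UNIV. pi (Suc t) i * A t i j * (norm (theta t j - v))\<^sup>2)"
      by (rule sum.swap)
    also have "\<dots> = (\<Sum>j\<in>UNIV. (\<Sum>i\<in>UNIV. pi (Suc t) i * A t i j) * (norm (theta t j - v))\<^sup>2)"
      by (simp add: sum_distrib_right)
    also have "\<dots> = S t" by (simp add: S_def pi_stat[symmetric])
    finally show ?thesis .
  qed
  have Q2: "(\<Sum>i\<in>UNIV. pi (Suc t) i * (c \<bullet> y i)) = c \<bullet> (tb t - v)"
  proof -
    have "(\<Sum>i\<in>UNIV. pi (Suc t) i *\<^sub>R y i) = (\<Sum>j\<in>UNIV. (\<Sum>i\<in>UNIV. pi (Suc t) i * A t i j) *\<^sub>R (theta t j - v))"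
      unfolding y_def by (rule mix_sum)
    also have "\<dots> = (\<Sum>j\<in>UNIV. pi t j *\<^sub>R (theta t j - v))" by (simp add: pi_stat[symmetric])
    also have "\<dots> = tb t - v"
      by (simp add: tb_def scaleR_diff_right sum_subtractf scaleR_sum_left[symmetric] pi_sum)
    finally have "(\<Sum>i\<in>UNIV. pi (Suc t) i *\<^sub>R y i) = tb t - v" .
    moreover have "c \<bullet> (\<Sum>i\<in>UNIV. pi (Suc t) i *\<^sub>R y i) = (\<Sum>i\<in>UNIV. pi (Suc t) i * (c \<bullet> y i))"
      by (simp add: inner_sum_right)
    ultimately show ?thesis by simp
  qed
  have Q3: "eta * Sphi \<le> (\<Sum>i\<in>UNIV. pi (Suc t) i * (norm (phi t i))\<^sup>2)"
    unfolding Sphi_def sum_distrib_left by (rule sum_mono) (simp add: mult_right_mono pi_lower)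
  have F1: "S (Suc t) \<le> S t - 2 * alpha t * (c \<bullet> (tb t - v)) + (alpha t)\<^sup>2 * (norm c)\<^sup>2 - eta * Sphi"
  proof -
    have "S (Suc t) \<le> (\<Sum>i\<in>UNIV. pi (Suc t) i * ((\<Sum>j\<in>UNIV. A t i j * (norm (theta t j - v))\<^sup>2)
            - 2 * alpha t * (c \<bullet> y i) + (alpha t)\<^sup>2 * (norm c)\<^sup>2 - (norm (phi t i))\<^sup>2))"
      unfolding S_def
    proof (intro sum_mono mult_left_mono)
      fix i
      show "(norm (theta (Suc t) i - v))\<^sup>2 \<le> (\<Sum>j\<in>UNIV. A t i j * (norm (theta t j - v))\<^sup>2)
            - 2 * alpha t * (c \<bullet> y i) + (alpha t)\<^sup>2 * (norm c)\<^sup>2 - (norm (phi t i))\<^sup>2"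
        using P1[of i] P3[of i] by linarith
      show "0 \<le> pi (Suc t) i" by (rule pi_nonneg)
    qed
    also have "\<dots> = (\<Sum>i\<in>UNIV. pi (Suc t) i * (\<Sum>j\<in>UNIV. A t i j * (norm (theta t j - v))\<^sup>2))
        - 2 * alpha t * (\<Sum>i\<in>UNIV. pi (Suc t) i * (c \<bullet> y i))
        + (alpha t)\<^sup>2 * (norm c)\<^sup>2 * (\<Sum>i\<in>UNIV. pi (Suc t) i)
        - (\<Sum>i\<in>UNIV. pi (Suc t) i * (norm (phi t i))\<^sup>2)"
      by (simp add: ring_distribs sum.distrib sum_subtractf sum_distrib_left sum_distrib_right mult_ac)
    finally show ?thesis using Q1 Q2 Q3 pi_sum[of "Suc t"] by simp
  qed
  have th_U: "theta s i \<in> (\<Union>i. Om i)" for s i using th_in by blast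
  have tb_hull: "tb t \<in> convex hull (\<Union>i. Om i)"
    unfolding tb_def
    by (rule convex_sum) (auto simp: pi_sum pi_nonneg intro: hull_inc[OF th_U])
  have Omega_closed: "closed Omega" unfolding Omega_def using Om_closed by auto
  have w_eq: "w t = closest_point Omega (tb t)" by (simp add: w_def Omega_def tb_def)
  have dw: "norm (tb t - w t) \<le> infdist (tb t) Omega"
  proof -
    obtain z where z: "z \<in> Omega" "infdist (tb t) Omega = dist (tb t) z"
      using infdist_attains_inf[OF Omega_closed Omega_ne] by blast
    have "dist (tb t) (closest_point Omega (tb t)) \<le> dist (tb t) z"
      by (rule closest_point_le[OF Omega_closed z(1)])
    then show ?thesis using z w_eq by (simp add: dist_norm)
  qed
  have mx: "Max (range (\<lambda>i. infdist (tb t) (Om i))) \<le> E t"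
  proof (subst Max_le_iff)
    show "\<forall>a\<in>range (\<lambda>i. infdist (tb t) (Om i)). a \<le> E t"
    proof
      fix a assume "a \<in> range (\<lambda>i. infdist (tb t) (Om i))"
      then obtain i where "a = infdist (tb t) (Om i)" by blast
      also have "\<dots> \<le> dist (tb t) (theta t i)" by (rule infdist_le[OF th_in])
      also have "\<dots> = norm (theta t i - tb t)" by (simp add: dist_norm norm_minus_commute)
      also have "\<dots> \<le> E t" by (rule cons)
      finally show "a \<le> E t" .
    qed
  qed auto
  have dwE: "norm (tb t - w t) \<le> R * E t"
    using dw regular[OF tb_hull] mult_left_mono[OF mx, of R] R_ge1 by linarith
  have D3ge: "2 * C * R \<le> D3"
  proof -
    have "R \<le> R / eta" using R_ge1 eta_pos eta_le1 by (simp add: le_divide_eq mult_left_le)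
    then show ?thesis unfolding D3_def C_def using C_def C_nn by (simp add: mult_left_mono)
  qed
  have F2: "- 2 * alpha t * (c \<bullet> (tb t - v)) \<le> - 2 * alpha t * (c \<bullet> (w t - v))
        + (D13 * alpha t * lambda ^ t + D3 * B * psi t + D23 * alpha t * (\<Sum>r<t. lambda ^ (t - r - 1) * alpha r))"
  proof -
    have "c \<bullet> (tb t - v) = c \<bullet> (w t - v) + c \<bullet> (tb t - w t)" by (simp add: inner_diff_right)
    moreover have "- (c \<bullet> (tb t - w t)) \<le> C * norm (tb t - w t)"
      using norm_cauchy_schwarz[of "-c" "tb t - w t"] by (simp add: C_def)
    moreover have "C * norm (tb t - w t) \<le> C * (R * E t)" by (rule mult_left_mono[OF dwE C_nn])
    moreover have "2 * C * R * E t \<le> D3 * E t" by (rule mult_right_mono[OF D3ge E_nn])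
    moreover have "alpha t * (D3 * E t) = D13 * alpha t * lambda ^ t + D3 * B * psi t
                     + D23 * alpha t * (\<Sum>r<t. lambda ^ (t - r - 1) * alpha r)"
      by (simp add: E_def psi_eq D13_def D23_def D1_def D2_def D3_def m_def C_def ring_distribs mult_ac)
    ultimately have H: "- (c \<bullet> (tb t - v)) \<le> - (c \<bullet> (w t - v)) + D3 * E t / 2" by simp
    have "2 * alpha t * (- (c \<bullet> (tb t - v))) \<le> 2 * alpha t * (- (c \<bullet> (w t - v)) + D3 * E t / 2)"
      by (rule mult_left_mono[OF H]) (use alpha_pos[of t] in simp)
    then show ?thesis using \<open>alpha t * (D3 * E t) = _\<close> by (simp add: algebra_simps)
  qed
  have psi_step: "psi (Suc t) \<le> lambda * psi t + alpha t * beta t"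
  proof -
    have "(\<Sum>r<Suc t. lambda ^ (Suc t - r - 1) * beta r)
         = lambda * (\<Sum>r<t. lambda ^ (t - r - 1) * beta r) + beta t"
    proof -
      have "(\<Sum>r<t. lambda ^ (Suc t - r - 1) * beta r) = (\<Sum>r<t. lambda * (lambda ^ (t - r - 1) * beta r))"
      proof (rule sum.cong[OF refl])
        fix r assume "r \<in> {..<t}"
        then have "Suc t - r - 1 = Suc (t - r - 1)" by auto
        then show "lambda ^ (Suc t - r - 1) * beta r = lambda * (lambda ^ (t - r - 1) * beta r)" by simp
      qed
      then show ?thesis by (simp add: sum_distrib_left)
    qed
    moreover have "0 \<le> lambda * (\<Sum>r<t. lambda ^ (t - r - 1) * beta r) + beta t"
      using lambda_pos beta_nn by (intro add_nonneg_nonneg mult_nonneg_nonneg sum_nonneg) (auto simp: less_imp_le)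
    ultimately have "psi (Suc t) \<le> alpha t * (lambda * (\<Sum>r<t. lambda ^ (t - r - 1) * beta r) + beta t)"
      unfolding psi_eq[of "Suc t"] using alpha_noninc[of t] by (simp add: mult_right_mono)
    then show ?thesis by (simp add: psi_eq ring_distribs mult_ac)
  qed
  have b_pos: "b > 0" unfolding b_def using eta_pos by simp
  have b2: "b\<^sup>2 = eta / m" unfolding b_def m_def using eta_pos by simp
  have ab: "a * b * (1 - lambda) = D3 * B"
    unfolding a_def D3_def using b_pos lambda_lt1 by (simp add: b_def[symmetric] field_simps)
  have ab_nn: "a * b \<ge> 0"
  proof -
    have "D3 * B \<ge> 0" unfolding D3_def using B_pos eta_pos R_ge1 by simp
    then have "0 \<le> (a * b) * (1 - lambda)" using ab by simp
    then show ?thesis using lambda_lt1 by (simp add: zero_le_mult_iff)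
  qed
  have beta2: "b\<^sup>2 * (beta t)\<^sup>2 \<le> eta * Sphi"
  proof -
    have "(beta t)\<^sup>2 \<le> Sphi * m"
      unfolding beta_def Sphi_def m_def using sum_squared_le_sum_of_squares[of "\<lambda>i. norm (phi t i)" UNIV] by simp
    then have "b\<^sup>2 * (beta t)\<^sup>2 \<le> b\<^sup>2 * (Sphi * m)" by (simp add: mult_left_mono)
    also have "\<dots> = eta * Sphi" using b2 m_pos by simp
    finally show ?thesis .
  qed
  have amgm: "a * b * (alpha t * beta t) \<le> a\<^sup>2 / 2 * (alpha t)\<^sup>2 + b\<^sup>2 * (beta t)\<^sup>2 / 2"
  proof -
    have "0 \<le> (a * alpha t - b * beta t)\<^sup>2" by simp
    then show ?thesis by (simp add: power2_eq_square algebra_simps)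
  qed
  have F3: "a * b * psi (Suc t) \<le> a * b * psi t - D3 * B * psi t + a\<^sup>2 / 2 * (alpha t)\<^sup>2 + eta / 2 * Sphi"
  proof -
    have "a * b * psi (Suc t) \<le> a * b * (lambda * psi t + alpha t * beta t)"
      by (rule mult_left_mono[OF psi_step ab_nn])
    also have "\<dots> = a * b * psi t - a * b * (1 - lambda) * psi t + a * b * (alpha t * beta t)"
      by (simp add: algebra_simps)
    finally show ?thesis using ab amgm beta2 by simp
  qed
  have D5eq: "D5 = (norm c)\<^sup>2 + a\<^sup>2 / 2" by (simp add: D5_def a_def)
  have lhs: "(\<Sum>i\<in>UNIV. pi (Suc t) i * (norm (theta (Suc t) i - v))\<^sup>2) = S (Suc t)" by (simp add: S_def)
  have rhs: "(\<Sum>i\<in>UNIV. pi t i * (norm (theta t i - v))\<^sup>2) = S t" by (simp add: S_def)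
  show ?thesis unfolding lhs rhs Sphi_def[symmetric] D5eq D4_def
    using F1 F2 F3 by (simp add: algebra_simps)
qed

end
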